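(* Let $(G,M,\Delta)$ be a Garside structure, $\mathcal S=\mathrm{Div}(\Delta)\setminus\{1\}$ and $\lg$ the word length on $G$ with respect to $\mathcal S$. Let $\alpha\in G$ and let $\alpha=\Delta^p a$ be its left $\Delta$-form. Then: (1) if $p\ge0$, $\lg(\alpha)=\lg(a)+p$; (2) if $p\le-\lg(a)$, $\lg(\alpha)=-p$; (3) if $-\lg(a)\le p\le0$, $\lg(\alpha)=\lg(a)$. In summary, $\lg(\alpha)=\max(\lg(a)+p,\,-p,\,\lg(a))$.
   Context: Let $G$ be a group and $M$ a submonoid with $M\cap M^{-1}=\{1\}$. Define $\alpha\le_L\beta$ iff $\alpha^{-1}\beta\in M$, and $\alpha\le_R\beta$ iff $\beta\alpha^{-1}\in M$. For $a\in M$ let $\mathrm{Div}_L(a)=\{b\in M: b\le_L a\}$, $\mathrm{Div}_R(a)=\{b\in M: b\le_R a\}$; $a$ is balanced if these coincide, and then $\mathrm{Div}(a)$ denotes this set. $M$ is Noetherian if each $a\in M$ admits an $n$ such that $a$ is not a product of more than $n$ non-trivial factors. A Garside structure $(G,M,\Delta)$: $\Delta\in M$ balanced, $M$ Noetherian, $\mathrm{Div}(\Delta)$ finite and generating $M$ as a monoid and $G$ as a group, $(G,\le_L)$ a lattice. An element $a\in M$ is unmovable if $\Delta\not\le_L a$. Every $\alpha\in G$ can be written uniquely as $\alpha=\Delta^p a$ with $p\in\mathbb Z$ and $a\in M$ unmovable; this is its left $\Delta$-form. *)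

theory Defs
  imports "HOL-Algebra.Algebra"
begin

definition lprod :: "('a, 'b) monoid_scheme \<Rightarrow> 'a list \<Rightarrow> 'a" where
  "lprod G xs = foldr (\<lambda>x y. x \<otimes>\<^bsub>G\<^esub> y) xs \<one>\<^bsub>G\<^esub>"

definition leL :: "('a, 'b) monoid_scheme \<Rightarrow> 'a set \<Rightarrow> 'a \<Rightarrow> 'a \<Rightarrow> bool" where
  "leL G M x y \<longleftrightarrow> inv\<^bsub>G\<^esub> x \<otimes>\<^bsub>G\<^esub> y \<in> M"

definition leR :: "('a, 'b) monoid_scheme \<Rightarrow> 'a set \<Rightarrow> 'a \<Rightarrow> 'a \<Rightarrow> bool" where
  "leR G M x y \<longleftrightarrow> y \<otimes>\<^bsub>G\<^esub> inv\<^bsub>G\<^esub> x \<in> M"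

definition DivL :: "('a, 'b) monoid_scheme \<Rightarrow> 'a set \<Rightarrow> 'a \<Rightarrow> 'a set" where
  "DivL G M a = {b \<in> M. leL G M b a}"

definition DivR :: "('a, 'b) monoid_scheme \<Rightarrow> 'a set \<Rightarrow> 'a \<Rightarrow> 'a set" where
  "DivR G M a = {b \<in> M. leR G M b a}"

definition balanced :: "('a, 'b) monoid_scheme \<Rightarrow> 'a set \<Rightarrow> 'a \<Rightarrow> bool" where
  "balanced G M a \<longleftrightarrow> a \<in> M \<and> DivL G M a = DivR G M a"

text \<open>Div(a) for balanced a (defined as the left divisors).\<close>
definition Div :: "('a, 'b) monoid_scheme \<Rightarrow> 'a set \<Rightarrow> 'a \<Rightarrow> 'a set" where
  "Div G M a = DivL G M a"

definition submonoid_pointed :: "('a, 'b) monoid_scheme \<Rightarrow> 'a set \<Rightarrow> bool" where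
  "submonoid_pointed G M \<longleftrightarrow> M \<subseteq> carrier G \<and> \<one>\<^bsub>G\<^esub> \<in> M
     \<and> (\<forall>x\<in>M. \<forall>y\<in>M. x \<otimes>\<^bsub>G\<^esub> y \<in> M)
     \<and> M \<inter> (\<lambda>x. inv\<^bsub>G\<^esub> x) ` M = {\<one>\<^bsub>G\<^esub>}"

definition noetherian :: "('a, 'b) monoid_scheme \<Rightarrow> 'a set \<Rightarrow> bool" where
  "noetherian G M \<longleftrightarrow> (\<forall>a\<in>M. \<exists>n::nat. \<forall>xs.
      set xs \<subseteq> M - {\<one>\<^bsub>G\<^esub>} \<and> lprod G xs = a \<longrightarrow> length xs \<le> n)"

definition leL_lattice :: "('a, 'b) monoid_scheme \<Rightarrow> 'a set \<Rightarrow> bool" where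
  "leL_lattice G M \<longleftrightarrow>
     (\<forall>x\<in>carrier G. \<forall>y\<in>carrier G. \<exists>z\<in>carrier G.
        leL G M z x \<and> leL G M z y \<and> (\<forall>w\<in>carrier G. leL G M w x \<and> leL G M w y \<longrightarrow> leL G M w z)) \<and>
     (\<forall>x\<in>carrier G. \<forall>y\<in>carrier G. \<exists>z\<in>carrier G.
        leL G M x z \<and> leL G M y z \<and> (\<forall>w\<in>carrier G. leL G M x w \<and> leL G M y w \<longrightarrow> leL G M z w))"

definition garside :: "('a, 'b) monoid_scheme \<Rightarrow> 'a set \<Rightarrow> 'a \<Rightarrow> bool" where
  "garside G M \<Delta> \<longleftrightarrow> group G \<and> submonoid_pointed G M \<and> \<Delta> \<in> M \<and> balanced G M \<Delta>
     \<and> noetherian G M \<and> finite (Div G M \<Delta>)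
     \<and> M = {lprod G xs | xs. set xs \<subseteq> Div G M \<Delta>}
     \<and> generate G (Div G M \<Delta>) = carrier G
     \<and> leL_lattice G M"

definition unmovable :: "('a, 'b) monoid_scheme \<Rightarrow> 'a set \<Rightarrow> 'a \<Rightarrow> 'a \<Rightarrow> bool" where
  "unmovable G M \<Delta> a \<longleftrightarrow> a \<in> M \<and> \<not> leL G M \<Delta> a"

definition word_length :: "('a, 'b) monoid_scheme \<Rightarrow> 'a set \<Rightarrow> 'a \<Rightarrow> nat" where
  "word_length G S x = (LEAST n. \<exists>xs. length xs = n
       \<and> set xs \<subseteq> S \<union> (\<lambda>s. inv\<^bsub>G\<^esub> s) ` S \<and> lprod G xs = x)"

end

theory Submission
  imports Defs
begin

lemma lprod_Cons[simp]: "lprod G (x # xs) = x \<otimes>\<^bsub>G\<^esub> lprod G xs"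
  by (simp add: lprod_def)
lemma lprod_Nil[simp]: "lprod G [] = \<one>\<^bsub>G\<^esub>"
  by (simp add: lprod_def)

locale gs = group G for G (structure) +
  fixes M and D
  assumes gar: "garside G M D"
begin

abbreviation "Dv \<equiv> Div G M D"

lemma lprod_closed: "set xs \<subseteq> carrier G \<Longrightarrow> lprod G xs \<in> carrier G"
  by (induction xs) auto

lemma lprod_append: "set xs \<subseteq> carrier G \<Longrightarrow> set ys \<subseteq> carrier G \<Longrightarrow>
   lprod G (xs @ ys) = lprod G xs \<otimes> lprod G ys"
  by (induction xs) (auto simp: m_assoc lprod_closed)

lemma M_sub: "M \<subseteq> carrier G" and one_M: "\<one> \<in> M"
  and M_mult: "x \<in> M \<Longrightarrow> y \<in> M \<Longrightarrow> x \<otimes> y \<in> M"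
  using gar unfolding garside_def submonoid_pointed_def by auto

lemma M_carr: "x \<in> M \<Longrightarrow> x \<in> carrier G" using M_sub by auto

lemma canc1[simp]: "x \<in> carrier G \<Longrightarrow> y \<in> carrier G \<Longrightarrow> x \<otimes> (inv x \<otimes> y) = y"
  by (simp add: m_assoc[symmetric])
lemma canc2[simp]: "x \<in> carrier G \<Longrightarrow> y \<in> carrier G \<Longrightarrow> inv x \<otimes> (x \<otimes> y) = y"
  by (simp add: m_assoc[symmetric])

lemma M_anti: assumes "x \<in> M" "inv x \<in> M" shows "x = \<one>"
proof -
  have "M \<inter> (\<lambda>x. inv x) ` M = {\<one>}"
    using gar unfolding garside_def submonoid_pointed_def by auto
  moreover have "x = inv (inv x)" using assms M_carr by simp
  ultimately show ?thesis using assms by blast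
qed

lemma D_M: "D \<in> M" and D_carr: "D \<in> carrier G"
  using gar M_carr unfolding garside_def by auto

lemma Dv_eq: "Dv = DivR G M D"
  using gar unfolding garside_def balanced_def Div_def by auto

lemma Dv_iff: "s \<in> Dv \<longleftrightarrow> s \<in> M \<and> inv s \<otimes> D \<in> M"
  unfolding Div_def DivL_def leL_def by auto

lemma DvR_iff: "s \<in> Dv \<longleftrightarrow> s \<in> M \<and> D \<otimes> inv s \<in> M"
  unfolding Dv_eq DivR_def leR_def by auto

lemma Dv_M: "s \<in> Dv \<Longrightarrow> s \<in> M" using Dv_iff by auto
lemma Dv_carr: "s \<in> Dv \<Longrightarrow> s \<in> carrier G" using Dv_M M_carr by auto

lemma one_Dv: "\<one> \<in> Dv" using Dv_iff one_M D_M D_carr by auto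
lemma D_Dv: "D \<in> Dv" using Dv_iff one_M D_M D_carr by auto

lemma Dv_comp1: assumes "s \<in> Dv" shows "inv s \<otimes> D \<in> Dv"
proof -
  have s: "s \<in> carrier G" using assms Dv_carr by auto
  have "D \<otimes> inv (inv s \<otimes> D) = s"
    using s D_carr by (simp add: inv_mult_group m_assoc[symmetric])
  moreover have "inv s \<otimes> D \<in> M" using assms Dv_iff by auto
  ultimately show ?thesis unfolding DvR_iff by (simp add: Dv_M[OF assms])
qed

lemma Dv_comp2: assumes "s \<in> Dv" shows "D \<otimes> inv s \<in> Dv"
proof -
  have s: "s \<in> carrier G" using assms Dv_carr by auto
  have "inv (D \<otimes> inv s) \<otimes> D = s"
    using s D_carr by (simp add: inv_mult_group m_assoc)
  moreover have "D \<otimes> inv s \<in> M" using assms DvR_iff by auto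
  ultimately show ?thesis unfolding Dv_iff by (simp add: Dv_M[OF assms])
qed

lemma Dv_conj1: assumes "s \<in> Dv" shows "inv D \<otimes> s \<otimes> D \<in> Dv"
proof -
  have s: "s \<in> carrier G" using assms Dv_carr by auto
  have "inv (inv s \<otimes> D) \<otimes> D = inv D \<otimes> s \<otimes> D"
    using s D_carr by (simp add: inv_mult_group)
  then show ?thesis using Dv_comp1[OF Dv_comp1[OF assms]] by simp
qed

lemma Dv_conj2: assumes "s \<in> Dv" shows "D \<otimes> s \<otimes> inv D \<in> Dv"
proof -
  have s: "s \<in> carrier G" using assms Dv_carr by auto
  have "D \<otimes> inv (D \<otimes> inv s) = D \<otimes> s \<otimes> inv D"
    using s D_carr by (simp add: inv_mult_group m_assoc)
  then show ?thesis using Dv_comp2[OF Dv_comp2[OF assms]] by simp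
qed

lemma M_gen: "M = {lprod G xs | xs. set xs \<subseteq> Dv}"
  using gar unfolding garside_def by auto

lemma M_conj:
  assumes "m \<in> M" shows "inv D \<otimes> m \<otimes> D \<in> M" "D \<otimes> m \<otimes> inv D \<in> M"
proof -
  obtain xs where xs: "set xs \<subseteq> Dv" "m = lprod G xs" using assms M_gen by auto
  have "inv D \<otimes> lprod G xs \<otimes> D \<in> M \<and> D \<otimes> lprod G xs \<otimes> inv D \<in> M"
    using xs(1)
  proof (induction xs)
    case Nil then show ?case using D_carr one_M by simp
  next
    case (Cons x xs)
    have x: "x \<in> carrier G" "x \<in> Dv" using Cons Dv_carr by auto
    have l: "lprod G xs \<in> carrier G" using Cons Dv_carr lprod_closed by auto
    have "inv D \<otimes> (x \<otimes> lprod G xs) \<otimes> D = (inv D \<otimes> x \<otimes> D) \<otimes> (inv D \<otimes> lprod G xs \<otimes> D)"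
      using x l D_carr by (simp add: m_assoc)
    moreover have "D \<otimes> (x \<otimes> lprod G xs) \<otimes> inv D = (D \<otimes> x \<otimes> inv D) \<otimes> (D \<otimes> lprod G xs \<otimes> inv D)"
      using x l D_carr by (simp add: m_assoc)
    ultimately show ?case using Cons Dv_conj1[OF x(2)] Dv_conj2[OF x(2)] M_mult Dv_M by auto
  qed
  then show "inv D \<otimes> m \<otimes> D \<in> M" "D \<otimes> m \<otimes> inv D \<in> M" using xs by auto
qed

lemma pow_conj_gen:
  assumes Y: "Y \<subseteq> carrier G" and c1: "\<And>x. x \<in> Y \<Longrightarrow> D \<otimes> x \<otimes> inv D \<in> Y"
    and c2: "\<And>x. x \<in> Y \<Longrightarrow> inv D \<otimes> x \<otimes> D \<in> Y" and x: "x \<in> Y"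
  shows "D [^] (k::int) \<otimes> x \<otimes> inv (D [^] k) \<in> Y"
proof (induction k rule: int_induct[where k=0])
  case base then show ?case using x Y by auto
next
  case (step1 i)
  have xc: "D [^] i \<otimes> x \<otimes> inv (D [^] i) \<in> carrier G" using step1 Y by auto
  have "D [^] (1 + i) \<otimes> x \<otimes> inv (D [^] (1+i)) = D \<otimes> (D [^] i \<otimes> x \<otimes> inv (D [^] i)) \<otimes> inv D"
    using D_carr x Y by (auto simp: int_pow_mult inv_mult_group m_assoc)
  then show ?case using c1[OF step1(2)] by (simp add: add.commute)
next
  case (step2 i)
  have e: "D [^] (-1 + i) = inv D \<otimes> D [^] i"
    using D_carr by (simp only: int_pow_mult int_pow_neg int_pow_1)
  have "D [^] (-1 + i) \<otimes> x \<otimes> inv (D [^] (-1+i)) = inv D \<otimes> (D [^] i \<otimes> x \<otimes> inv (D [^] i)) \<otimes> D"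
    unfolding e using D_carr x Y by (auto simp: inv_mult_group m_assoc)
  then show ?case using c2[OF step2(2)] by simp
qed

lemma M_conjk: "m \<in> M \<Longrightarrow> D [^] (k::int) \<otimes> m \<otimes> inv (D [^] k) \<in> M"
  by (rule pow_conj_gen) (use M_sub M_conj in auto)

lemma Dv_conjk: "m \<in> Dv \<Longrightarrow> D [^] (k::int) \<otimes> m \<otimes> inv (D [^] k) \<in> Dv"
  by (rule pow_conj_gen) (use Dv_carr Dv_conj1 Dv_conj2 in auto)

lemma Dpow_M: "k \<ge> 0 \<Longrightarrow> D [^] (k::int) \<in> M"
proof -
  assume "k \<ge> 0"
  then obtain n where "k = int n" using nonneg_eq_int by auto
  moreover have "D [^] n \<in> M" by (induction n) (auto simp: one_M M_mult D_M)
  ultimately show ?thesis by (simp add: int_pow_int)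
qed

lemma Dnat_carr[simp]: "D [^] (n::nat) \<in> carrier G" using D_carr by simp

lemma M_conjn: assumes "m \<in> M"
  shows "D [^] (n::nat) \<otimes> m \<otimes> inv (D [^] n) \<in> M" "inv (D [^] (n::nat)) \<otimes> m \<otimes> D [^] n \<in> M"
  using M_conjk[OF assms, of "int n"] M_conjk[OF assms, of "- int n"] D_carr
  by (auto simp: int_pow_int int_pow_neg_int)

lemma Dv_conjn: assumes "m \<in> Dv"
  shows "D [^] (n::nat) \<otimes> m \<otimes> inv (D [^] n) \<in> Dv" "inv (D [^] (n::nat)) \<otimes> m \<otimes> D [^] n \<in> Dv"
  using Dv_conjk[OF assms, of "int n"] Dv_conjk[OF assms, of "- int n"] D_carr
  by (auto simp: int_pow_int int_pow_neg_int)

lemma DnM: "D [^] (n::nat) \<in> M" using Dpow_M[of "int n"] by (simp add: int_pow_int)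

lemma Dpow_M_neg: assumes "D \<noteq> \<one>" "D [^] (k::int) \<in> M" shows "k \<ge> 0"
proof (rule ccontr)
  assume "\<not> k \<ge> 0"
  then have "k < 0" by simp
  define m where "m = nat (- k) - 1"
  have m: "k = - int (Suc m)" using \<open>k < 0\<close> m_def by simp
  have "inv (D [^] Suc m) \<in> M" using assms(2) unfolding m by (simp only: int_pow_neg_int[OF D_carr])
  then have e: "D [^] Suc m = \<one>" by (rule M_anti[OF DnM])
  have "D [^] m \<otimes> D = \<one>" using e by (simp only: nat_pow_Suc)
  then have "inv D = D [^] m" by (rule inv_equality) (simp_all add: D_carr)
  then have "inv D \<in> M" using DnM by (simp only:)
  then show False using M_anti[OF D_M] assms(1) by blast
qed

lemma lower:
  assumes "set xs \<subseteq> Dv \<union> (\<lambda>s. inv s) ` Dv"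
  shows "\<exists>P N. P + N = length xs \<and> inv (lprod G xs) \<otimes> D [^] (P::nat) \<in> M \<and> D [^] (N::nat) \<otimes> lprod G xs \<in> M"
  using assms
proof (induction xs)
  case Nil then show ?case using DnM[of 0] one_M by (intro exI[of _ 0]) simp
next
  case (Cons x xs)
  then obtain P N where PN: "P + N = length xs" "inv (lprod G xs) \<otimes> D [^] P \<in> M" "D [^] N \<otimes> lprod G xs \<in> M"
    by auto
  have l: "lprod G xs \<in> carrier G" using Cons(2) Dv_carr by (intro lprod_closed) auto
  from Cons(2) have "x \<in> Dv \<or> (\<exists>s\<in>Dv. x = inv s)" by auto
  then show ?case
  proof
    assume x: "x \<in> Dv"
    have xc: "x \<in> carrier G" using x Dv_carr by auto
    have c: "D [^] P \<otimes> D = D \<otimes> D [^] P" using D_carr by (metis nat_pow_Suc nat_pow_Suc2)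
    have e1: "inv (x \<otimes> lprod G xs) \<otimes> D [^] Suc P = (inv (lprod G xs) \<otimes> D [^] P) \<otimes> (inv (D [^] P) \<otimes> (inv x \<otimes> D) \<otimes> D [^] P)"
      using xc l D_carr by (simp add: c m_assoc[symmetric] inv_mult_group, simp add: m_assoc)
    have e2: "D [^] N \<otimes> (x \<otimes> lprod G xs) = (D [^] N \<otimes> x \<otimes> inv (D [^] N)) \<otimes> (D [^] N \<otimes> lprod G xs)"
      using xc l D_carr by (simp add: m_assoc)
    have "inv (x \<otimes> lprod G xs) \<otimes> D [^] Suc P \<in> M"
      unfolding e1 using PN M_conjn(2) x Dv_iff M_mult by blast
    moreover have "D [^] N \<otimes> (x \<otimes> lprod G xs) \<in> M"
      unfolding e2 using PN M_conjn(1) x Dv_M M_mult by blast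
    ultimately show ?case using PN by (intro exI[of _ "Suc P"] exI[of _ N]) simp
  next
    assume "\<exists>s\<in>Dv. x = inv s"
    then obtain s where s: "s \<in> Dv" "x = inv s" by auto
    have sc: "s \<in> carrier G" using s Dv_carr by auto
    have e1: "inv (inv s \<otimes> lprod G xs) \<otimes> D [^] P = (inv (lprod G xs) \<otimes> D [^] P) \<otimes> (inv (D [^] P) \<otimes> s \<otimes> D [^] P)"
      using sc l D_carr by (simp add: m_assoc inv_mult_group)
    have e2: "D [^] Suc N \<otimes> (inv s \<otimes> lprod G xs) = (D [^] N \<otimes> (D \<otimes> inv s) \<otimes> inv (D [^] N)) \<otimes> (D [^] N \<otimes> lprod G xs)"
      using sc l D_carr by (simp add: m_assoc)
    have "inv (inv s \<otimes> lprod G xs) \<otimes> D [^] P \<in> M"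
      unfolding e1 using PN M_conjn(2) s Dv_M M_mult by blast
    moreover have "D [^] Suc N \<otimes> (inv s \<otimes> lprod G xs) \<in> M"
      unfolding e2 using PN M_conjn(1) s DvR_iff M_mult by blast
    ultimately show ?case using PN s by (intro exI[of _ P] exI[of _ "Suc N"]) simp
  qed
qed

lemma meet: assumes "x \<in> carrier G" "y \<in> carrier G"
  obtains z where "z \<in> carrier G" "leL G M z x" "leL G M z y"
    "\<And>w. w \<in> carrier G \<Longrightarrow> leL G M w x \<Longrightarrow> leL G M w y \<Longrightarrow> leL G M w z"
proof -
  have "leL_lattice G M" using gar unfolding garside_def by blast
  then have "\<exists>z\<in>carrier G. leL G M z x \<and> leL G M z y \<and> (\<forall>w\<in>carrier G. leL G M w x \<and> leL G M w y \<longrightarrow> leL G M w z)"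
    using assms unfolding leL_lattice_def by blast
  then show thesis using that by blast
qed

lemma factor:
  assumes "a \<in> M" "inv a \<otimes> D [^] (k::nat) \<in> M"
  shows "\<exists>xs. set xs \<subseteq> Dv \<and> length xs = k \<and> lprod G xs = a"
  using assms
proof (induction k arbitrary: a)
  case 0
  have "inv a \<in> M" using 0(2) M_carr[OF 0(1)] by simp
  then have "a = \<one>" using M_anti[OF 0(1)] by blast
  then show ?case by (intro exI[of _ "[]"]) simp
next
  case (Suc k)
  have ac: "a \<in> carrier G" using Suc.prems(1) M_carr by blast
  obtain b where b: "b \<in> carrier G" "leL G M b a" "leL G M b (D [^] k)"
    and bmax: "\<And>w. w \<in> carrier G \<Longrightarrow> leL G M w a \<Longrightarrow> leL G M w (D [^] k) \<Longrightarrow> leL G M w b"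
    using meet[OF ac Dnat_carr[of k]] by blast
  have "leL G M \<one> b" using bmax[of \<one>] Suc(2) DnM M_carr unfolding leL_def by simp
  then have bM: "b \<in> M" using b unfolding leL_def by simp
  have bk: "inv b \<otimes> D [^] k \<in> M" using b unfolding leL_def by simp
  define w where "w = a \<otimes> inv D"
  have wc: "w \<in> carrier G" using w_def ac D_carr by simp
  have "inv w \<otimes> a = D" using ac D_carr by (simp add: w_def inv_mult_group m_assoc)
  then have "leL G M w a" unfolding leL_def using D_M by simp
  moreover have "inv w \<otimes> D [^] k = D \<otimes> (inv a \<otimes> D [^] Suc k) \<otimes> inv D"
    using ac D_carr by (simp add: w_def inv_mult_group m_assoc)
  then have "leL G M w (D [^] k)" unfolding leL_def using M_conj(2)[OF Suc(3)] by simp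
  ultimately have "inv w \<otimes> b \<in> M" using bmax[OF wc] unfolding leL_def by blast
  then have "inv D \<otimes> (inv w \<otimes> b) \<otimes> D \<in> M" using M_conj(1) by blast
  moreover have "inv D \<otimes> (inv w \<otimes> b) \<otimes> D = inv (inv b \<otimes> a) \<otimes> D"
    using ac D_carr b by (simp add: w_def inv_mult_group m_assoc)
  moreover have cM: "inv b \<otimes> a \<in> M" using b unfolding leL_def by simp
  ultimately have cD: "inv b \<otimes> a \<in> Dv" unfolding Dv_iff by simp
  obtain ys where ys: "set ys \<subseteq> Dv" "length ys = k" "lprod G ys = b" using Suc.IH[OF bM bk] by blast
  have "lprod G (ys @ [inv b \<otimes> a]) = b \<otimes> (inv b \<otimes> a)"
    using ys cD Dv_carr by (subst lprod_append) auto
  also have "\<dots> = a" using b ac by simp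
  finally show ?case using ys cD by (intro exI[of _ "ys @ [inv b \<otimes> a]"]) auto
qed

lemma upper:
  assumes "set xs \<subseteq> Dv"
  shows "\<exists>ys. set ys \<subseteq> Dv \<and> length ys = length xs \<and> inv (D [^] length xs) \<otimes> lprod G xs = lprod G (map (\<lambda>s. inv s) ys)"
  using assms
proof (induction xs)
  case Nil then show ?case by simp
next
  case (Cons x xs)
  then obtain ys where ys: "set ys \<subseteq> Dv" "length ys = length xs" "inv (D [^] length xs) \<otimes> lprod G xs = lprod G (map (\<lambda>s. inv s) ys)"
    by auto
  have l: "lprod G xs \<in> carrier G" using Cons(2) Dv_carr by (intro lprod_closed) auto
  have x: "x \<in> Dv" "x \<in> carrier G" using Cons(2) Dv_carr by auto
  define x' where "x' = inv (D [^] length xs) \<otimes> x \<otimes> D [^] length xs"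
  have x'D: "x' \<in> Dv" using Dv_conjn(2)[OF x(1)] x'_def by simp
  have x'c: "x' \<in> carrier G" using x'D Dv_carr by auto
  define y where "y = inv x' \<otimes> D"
  have yD: "y \<in> Dv" using Dv_comp1[OF x'D] y_def by simp
  have "inv (D [^] length (x # xs)) \<otimes> lprod G (x # xs) = inv y \<otimes> (inv (D [^] length xs) \<otimes> lprod G xs)"
    using x l D_carr x'c by (simp add: y_def x'_def inv_mult_group m_assoc)
  then show ?case using ys yD by (intro exI[of _ "y # ys"]) simp
qed

abbreviation "wl \<equiv> word_length G (Dv - {\<one>})"

lemma lprod_filter: "set xs \<subseteq> carrier G \<Longrightarrow> lprod G (filter (\<lambda>x. x \<noteq> \<one>) xs) = lprod G xs"
  by (induction xs) (auto simp: lprod_closed)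

lemma word_filter:
  assumes "set xs \<subseteq> Dv \<union> (\<lambda>s. inv s) ` Dv"
  shows "set (filter (\<lambda>x. x \<noteq> \<one>) xs) \<subseteq> (Dv - {\<one>}) \<union> (\<lambda>s. inv s) ` (Dv - {\<one>})"
    "lprod G (filter (\<lambda>x. x \<noteq> \<one>) xs) = lprod G xs"
proof -
  show "set (filter (\<lambda>x. x \<noteq> \<one>) xs) \<subseteq> (Dv - {\<one>}) \<union> (\<lambda>s. inv s) ` (Dv - {\<one>})"
  proof
    fix x assume x: "x \<in> set (filter (\<lambda>x. x \<noteq> \<one>) xs)"
    then have "x \<in> Dv \<or> (\<exists>s\<in>Dv. x = inv s)" "x \<noteq> \<one>" using assms by auto
    then show "x \<in> (Dv - {\<one>}) \<union> (\<lambda>s. inv s) ` (Dv - {\<one>})" by auto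
  qed
  have "set xs \<subseteq> carrier G" using assms Dv_carr by auto
  then show "lprod G (filter (\<lambda>x. x \<noteq> \<one>) xs) = lprod G xs" by (rule lprod_filter)
qed

lemma wl_le:
  assumes "set xs \<subseteq> Dv \<union> (\<lambda>s. inv s) ` Dv"
  shows "wl (lprod G xs) \<le> length xs"
proof -
  have "wl (lprod G xs) \<le> length (filter (\<lambda>x. x \<noteq> \<one>) xs)"
    unfolding word_length_def using word_filter[OF assms] by (intro Least_le) blast
  also have "\<dots> \<le> length xs" by simp
  finally show ?thesis .
qed

lemma wl_wit:
  assumes "set xs \<subseteq> Dv \<union> (\<lambda>s. inv s) ` Dv"
  shows "\<exists>ws. length ws = wl (lprod G xs) \<and> set ws \<subseteq> Dv \<union> (\<lambda>s. inv s) ` Dv \<and> lprod G ws = lprod G xs"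
proof -
  have "\<exists>n ws. length ws = n \<and> set ws \<subseteq> (Dv - {\<one>}) \<union> (\<lambda>s. inv s) ` (Dv - {\<one>}) \<and> lprod G ws = lprod G xs"
    using word_filter[OF assms] by blast
  then have "\<exists>ws. length ws = wl (lprod G xs) \<and> set ws \<subseteq> (Dv - {\<one>}) \<union> (\<lambda>s. inv s) ` (Dv - {\<one>}) \<and> lprod G ws = lprod G xs"
    unfolding word_length_def by (rule LeastI_ex)
  then show ?thesis by blast
qed

lemma lprod_rep: "x \<in> carrier G \<Longrightarrow> lprod G (replicate n x) = x [^] n"
  by (induction n) (simp_all, metis nat_pow_Suc nat_pow_Suc2)

lemma main:
  assumes um: "unmovable G M D a"
  shows "int (wl (D [^] p \<otimes> a)) = max (int (wl a) + p) 0 + max (- p) 0"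
proof -
  let ?L = "Dv \<union> (\<lambda>s. inv s) ` Dv"
  have aM: "a \<in> M" and na: "inv D \<otimes> a \<notin> M" using um unfolding unmovable_def leL_def by auto
  have ac: "a \<in> carrier G" using aM M_carr by auto
  have Dn1: "D \<noteq> \<one>" using na aM ac by auto
  define r where "r = wl a"
  obtain zs where zs: "set zs \<subseteq> Dv" "lprod G zs = a"
  proof -
    have "a \<in> {lprod G xs | xs. set xs \<subseteq> Dv}" using aM M_gen by blast
    then show ?thesis using that by blast
  qed
  obtain w0 where w0: "length w0 = r" "set w0 \<subseteq> ?L" "lprod G w0 = a"
    using wl_wit[of zs] zs r_def by auto
  obtain P0 N0 where PN0: "P0 + N0 = r" "inv a \<otimes> D [^] P0 \<in> M"
    using lower[OF w0(2)] w0 by auto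
  obtain xs0 where xs0: "set xs0 \<subseteq> Dv" "length xs0 = P0" "lprod G xs0 = a"
    using factor[OF aM PN0(2)] by auto
  define A where "A = xs0 @ replicate (r - P0) \<one>"
  have xs0c: "set xs0 \<subseteq> carrier G" using xs0 Dv_carr by auto
  have A12: "set A \<subseteq> Dv" "length A = r"
    using xs0 PN0 one_Dv unfolding A_def by auto
  have "lprod G A = lprod G xs0 \<otimes> lprod G (replicate (r - P0) \<one>)"
    unfolding A_def by (rule lprod_append) (use xs0c in auto)
  also have "\<dots> = a" using xs0 ac by (simp add: lprod_rep)
  finally have A3: "lprod G A = a" .
  note A = A12 A3
  have Ac: "set A \<subseteq> carrier G" using A Dv_carr by auto
  define B where "B = max (int r + p) 0 + max (- p) 0"
  have B0: "B \<ge> 0" using B_def by simp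
  have "\<exists>xs. set xs \<subseteq> ?L \<and> int (length xs) = B \<and> lprod G xs = D [^] p \<otimes> a"
  proof (cases "p \<ge> 0")
    case True
    let ?xs = "replicate (nat p) D @ A"
    have "lprod G ?xs = lprod G (replicate (nat p) D) \<otimes> lprod G A"
      by (rule lprod_append) (use Ac D_carr in auto)
    also have "\<dots> = D [^] p \<otimes> a"
      using A D_carr True by (simp add: lprod_rep pow_nat)
    finally have "lprod G ?xs = D [^] p \<otimes> a" .
    moreover have "int (length ?xs) = B" using A True B_def by simp
    moreover have "set ?xs \<subseteq> ?L" using A D_Dv by auto
    ultimately show ?thesis by blast
  next
    case False
    define q where "q = nat (- p)"
    have pq: "p = - int q" using False q_def by simp
    have Dp: "D [^] p = inv (D [^] q)" using pq D_carr by (simp add: int_pow_neg_int)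
    show ?thesis
    proof (cases "q \<le> r")
      case True
      obtain ys where ys: "set ys \<subseteq> Dv" "length ys = length (take q A)"
        "inv (D [^] length (take q A)) \<otimes> lprod G (take q A) = lprod G (map (\<lambda>s. inv s) ys)"
        using upper[of "take q A"] A(1) by (meson order_trans set_take_subset)
      have lt: "length (take q A) = q" using True A by simp
      let ?xs = "map (\<lambda>s. inv s) ys @ drop q A"
      have tc: "set (take q A) \<subseteq> carrier G" "set (drop q A) \<subseteq> carrier G"
        using Ac by (meson order_trans set_take_subset set_drop_subset)+
      have ysc: "set (map (\<lambda>s. inv s) ys) \<subseteq> carrier G" using ys Dv_carr by auto
      have "lprod G ?xs = lprod G (map (\<lambda>s. inv s) ys) \<otimes> lprod G (drop q A)"
        using ysc tc by (simp add: lprod_append)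
      also have "\<dots> = inv (D [^] q) \<otimes> (lprod G (take q A) \<otimes> lprod G (drop q A))"
      proof -
        have "lprod G (map (\<lambda>s. inv s) ys) = inv (D [^] q) \<otimes> lprod G (take q A)"
          using ys(3) lt by simp
        then show ?thesis using lprod_closed[OF tc(1)] lprod_closed[OF tc(2)] by (simp add: m_assoc)
      qed
      also have "\<dots> = D [^] p \<otimes> a"
        using A(3) Dp tc by (metis append_take_drop_id lprod_append)
      finally have "lprod G ?xs = D [^] p \<otimes> a" .
      moreover have "int (length ?xs) = B" using A True B_def ys lt pq by simp
      moreover have "set ?xs \<subseteq> ?L" using A ys by (auto dest: in_set_dropD)
      ultimately show ?thesis by blast
    next
      case False
      obtain ys where ys: "set ys \<subseteq> Dv" "length ys = length A"
        "inv (D [^] length A) \<otimes> lprod G A = lprod G (map (\<lambda>s. inv s) ys)"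
        using upper[of A] A(1) by blast
      let ?xs = "replicate (q - r) (inv D) @ map (\<lambda>s. inv s) ys"
      have ysc: "set (map (\<lambda>s. inv s) ys) \<subseteq> carrier G" using ys Dv_carr by auto
      have Dq0: "D [^] q = D [^] r \<otimes> D [^] (q - r)"
        using nat_pow_mult[OF D_carr, of r "q - r"] False by simp
      have Dq: "inv (D [^] q) = inv (D [^] (q - r)) \<otimes> inv (D [^] r)"
        unfolding Dq0 by (rule inv_mult_group) simp_all
      have p1: "lprod G (replicate (q - r) (inv D)) = inv (D [^] (q - r))"
        using D_carr by (simp add: lprod_rep nat_pow_inv)
      have p2: "lprod G (map (\<lambda>s. inv s) ys) = inv (D [^] r) \<otimes> a"
        using ys(3) A by simp
      have "lprod G ?xs = inv (D [^] (q - r)) \<otimes> (inv (D [^] r) \<otimes> a)"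
        using ysc D_carr by (subst lprod_append) (auto simp: p1 p2)
      also have "\<dots> = D [^] p \<otimes> a" using Dp Dq ac by (simp add: m_assoc)
      finally have "lprod G ?xs = D [^] p \<otimes> a" .
      moreover have "int (length ?xs) = B" using A False B_def ys pq by simp
      moreover have "set ?xs \<subseteq> ?L" using A ys D_Dv by auto
      ultimately show ?thesis by blast
    qed
  qed
  then obtain xs where xs: "set xs \<subseteq> ?L" "int (length xs) = B" "lprod G xs = D [^] p \<otimes> a" by blast
  have up: "int (wl (D [^] p \<otimes> a)) \<le> B" using wl_le[OF xs(1)] xs by simp
  obtain ws where ws: "length ws = wl (D [^] p \<otimes> a)" "set ws \<subseteq> ?L" "lprod G ws = D [^] p \<otimes> a"
    using wl_wit[OF xs(1)] xs by auto
  obtain P N where PN: "P + N = length ws" "inv (D [^] p \<otimes> a) \<otimes> D [^] P \<in> M" "D [^] N \<otimes> (D [^] p \<otimes> a) \<in> M"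
    using lower[OF ws(2)] ws by auto
  define k where "k = int P - p"
  have e1: "inv (D [^] p \<otimes> a) \<otimes> D [^] P = inv a \<otimes> D [^] k"
  proof -
    have "D [^] k = inv (D [^] p) \<otimes> D [^] (int P)"
      using D_carr unfolding k_def by (simp only: diff_conv_add_uminus add.commute[of "int P"] int_pow_mult int_pow_neg)
    then show ?thesis using D_carr ac by (simp add: inv_mult_group m_assoc int_pow_int)
  qed
  have k1: "inv a \<otimes> D [^] k \<in> M" using PN(2) e1 by simp
  have "D [^] k = a \<otimes> (inv a \<otimes> D [^] k)" using ac D_carr by simp
  then have "D [^] k \<in> M" using k1 aM M_mult by metis
  then have k0: "k \<ge> 0" using Dpow_M_neg Dn1 by blast
  then have "inv a \<otimes> D [^] (nat k) \<in> M" using k1 by (simp add: pow_nat)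
  then obtain ys where ys: "set ys \<subseteq> Dv" "length ys = nat k" "lprod G ys = a"
    using factor[OF aM] by blast
  have "r \<le> nat k" using wl_le[of ys] ys r_def by auto
  then have rk: "int r \<le> int P - p" using k0 k_def by simp
  define j where "j = int N + p"
  have e2: "D [^] N \<otimes> (D [^] p \<otimes> a) = D [^] j \<otimes> a"
    using D_carr ac unfolding j_def by (simp add: int_pow_mult int_pow_int m_assoc)
  have j0: "j \<ge> 0"
  proof (rule ccontr)
    assume "\<not> j \<ge> 0"
    then have "D [^] (- j - 1) \<in> M" using Dpow_M by simp
    moreover have "D [^] (- j - 1) \<otimes> (D [^] j \<otimes> a) = inv D \<otimes> a"
    proof -
      have "D [^] (- j - 1) \<otimes> D [^] j = D [^] ((- j - 1) + j)" using D_carr by (simp only: int_pow_mult)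
      also have "\<dots> = inv D" using D_carr by (simp add: int_pow_neg[of D 1, simplified])
      finally show ?thesis using D_carr ac by (simp add: m_assoc[symmetric])
    qed
    ultimately have "inv D \<otimes> a \<in> M" using PN(3) e2 M_mult by metis
    then show False using na by simp
  qed
  have "B \<le> int (length ws)" using PN rk j0 j_def B_def by simp
  then show ?thesis using up ws B_def r_def by simp
qed

end
theorem corollary2p4:
  fixes G :: "('a, 'b) monoid_scheme" and M :: "'a set" and \<Delta> \<alpha> a :: 'a and p :: int
  assumes "garside G M \<Delta>"
    and "\<alpha> \<in> carrier G"
    and "unmovable G M \<Delta> a"
    and "\<alpha> = (\<Delta> [^]\<^bsub>G\<^esub> p) \<otimes>\<^bsub>G\<^esub> a"
  defines "lg \<equiv> (\<lambda>x. int (word_length G (Div G M \<Delta> - {\<one>\<^bsub>G\<^esub>}) x))"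
  shows "(p \<ge> 0 \<longrightarrow> lg \<alpha> = lg a + p)
    \<and> (p \<le> - lg a \<longrightarrow> lg \<alpha> = - p)
    \<and> (- lg a \<le> p \<and> p \<le> 0 \<longrightarrow> lg \<alpha> = lg a)
    \<and> lg \<alpha> = max (lg a + p) (max (- p) (lg a))"
proof -
  have grp: "group G" using assms(1) unfolding garside_def by simp
  have "gs G M \<Delta>" unfolding gs_def gs_axioms_def using grp assms(1) by simp
  then have "int (word_length G (Div G M \<Delta> - {\<one>\<^bsub>G\<^esub>}) (\<Delta> [^]\<^bsub>G\<^esub> p \<otimes>\<^bsub>G\<^esub> a))
     = max (int (word_length G (Div G M \<Delta> - {\<one>\<^bsub>G\<^esub>}) a) + p) 0 + max (- p) 0"
    by (rule gs.main) (rule assms(3))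
  then have key: "lg \<alpha> = max (lg a + p) 0 + max (- p) 0"
    unfolding lg_def assms(4) .
  have "lg a \<ge> 0" unfolding lg_def by simp
  then show ?thesis using key by linarith
qed

end
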